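(* Let $X_0^*$ be a $\{1,2,\dots\}$-valued random variable with $\mathbf P(X_0^*\ge2)>0$ and $\mathbf E(X_0^*m^{X_0^*})<\infty$, and let $X_0$ have law $(1-p)\delta_0+pP_{X_0^*}$. If $p\in[p_c,1)$, then the system $(X_n)_{n\ge0}$ is $0$-regular with coefficient $\chi=1-p$.
   Context: Fix an integer $m\ge2$. A recursive system $(X_n)_{n\ge0}$: $X_{n+1}$ has the law of $(X_{n,1}+\cdots+X_{n,m}-1)^+$ with $X_{n,i}$ independent copies of $X_n$. $p_c:=\frac{1}{1+\mathbf E\{[(m-1)X_0^*-1]m^{X_0^*}\}}$; $p\ge p_c$ is equivalent to $\mathbf E\{[(m-1)X_0-1]m^{X_0}\}\ge0$. Regularity: for a $\mathbb Z_+$-valued random variable $\zeta$ with $\mathbf E(\zeta m^\zeta)<\infty$ and $\mathbf P(\zeta\ge2)>0$, set $\Lambda(\zeta):=\mathbf E(\zeta^3m^\zeta)\in(0,\infty]$ and, for integers $k\ge1$, $\Xi_k(\zeta):=\mathbf E[(\zeta\wedge k)^2((m-1)\zeta-1)m^\zeta]$. For $\beta\in[0,2]$ and $\chi\in(0,1]$, $\zeta$ is $\beta$-regular with coefficient $\chi$ if $\Xi_k(\zeta)\ge\chi\min\{\Lambda(\zeta),k^\beta\}$ for all integers $k\ge1$; a system is $\beta$-regular with coefficient $\chi$ if its $X_0$ is. *)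

theory Defs
  imports "HOL-Probability.Probability"
begin

text \<open>Laws of Z_+-valued random variables are modelled as nat pmfs. Expectations are
  Lebesgue integrals w.r.t. the pmf (nonnegative integrals in ennreal where the value may be infinite).\<close>

definition Lambda :: "nat \<Rightarrow> nat pmf \<Rightarrow> ennreal" where
  "Lambda m \<zeta> = (\<integral>\<^sup>+ x. ennreal (real x ^ 3 * real m ^ x) \<partial>measure_pmf \<zeta>)"

definition Xi :: "nat \<Rightarrow> nat \<Rightarrow> nat pmf \<Rightarrow> real" where
  "Xi m k \<zeta> = measure_pmf.expectation \<zeta>
      (\<lambda>x. real (min x k) ^ 2 * ((real m - 1) * real x - 1) * real m ^ x)"

definition beta_regular :: "nat \<Rightarrow> real \<Rightarrow> real \<Rightarrow> nat pmf \<Rightarrow> bool" where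
  "beta_regular m \<beta> chi \<zeta> \<longleftrightarrow>
     integrable (measure_pmf \<zeta>) (\<lambda>x. real x * real m ^ x) \<and>
     measure_pmf.prob \<zeta> {2..} > 0 \<and>
     0 \<le> \<beta> \<and> \<beta> \<le> 2 \<and> 0 < chi \<and> chi \<le> 1 \<and>
     (\<forall>k::nat. k \<ge> 1 \<longrightarrow>
        ereal (Xi m k \<zeta>) \<ge> ereal chi * min (enn2ereal (Lambda m \<zeta>)) (ereal (real k powr \<beta>)))"

definition p_crit :: "nat \<Rightarrow> nat pmf \<Rightarrow> real" where
  "p_crit m X = 1 / (1 + measure_pmf.expectation X (\<lambda>x. ((real m - 1) * real x - 1) * real m ^ x))"

definition mix_law :: "real \<Rightarrow> nat pmf \<Rightarrow> nat pmf" where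
  "mix_law p X = bind_pmf (bernoulli_pmf p) (\<lambda>b. if b then X else return_pmf 0)"

end

theory Submission
  imports Defs
begin

lemma mix_nn:
  assumes "0 \<le> p" "p \<le> 1"
  shows "(\<integral>\<^sup>+x. f x \<partial>measure_pmf (mix_law p X)) = ennreal p * (\<integral>\<^sup>+x. f x \<partial>measure_pmf X) + ennreal (1 - p) * f 0"
  unfolding mix_law_def
  apply (simp only: nn_integral_bind_pmf)
  apply (subst nn_integral_measure_pmf_support[of UNIV])
  using assms by (auto simp: UNIV_bool nn_integral_return mult.commute)

lemma mix_int:
  fixes f :: "nat \<Rightarrow> real"
  assumes p: "0 \<le> p" "p \<le> 1" and int: "integrable (measure_pmf X) f" and nn: "\<And>x. 0 \<le> f x"
  shows "integrable (measure_pmf (mix_law p X)) f \<and>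
         measure_pmf.expectation (mix_law p X) f = p * measure_pmf.expectation X f + (1 - p) * f 0"
proof -
  have e: "(\<integral>\<^sup>+x. ennreal (f x) \<partial>measure_pmf X) = ennreal (measure_pmf.expectation X f)"
    using int nn by (intro nn_integral_eq_integral) auto
  have i0: "0 \<le> measure_pmf.expectation X f" using nn by (intro integral_nonneg_AE) auto
  have "(\<integral>\<^sup>+x. ennreal (f x) \<partial>measure_pmf (mix_law p X)) = ennreal (p * measure_pmf.expectation X f + (1 - p) * f 0)"
    using mix_nn[OF p, where f="\<lambda>x. ennreal (f x)" and X=X] e p i0 nn
    by (simp add: ennreal_mult ennreal_plus[symmetric])
  moreover have "0 \<le> p * measure_pmf.expectation X f + (1 - p) * f 0" using p i0 nn by simp
  ultimately show ?thesis
    using nn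
    by (auto intro!: integrableI_nn_integral_finite simp: integral_eq_nn_integral)
qed

theorem lemma2p1:
  fixes m :: nat and X0star :: "nat pmf" and p :: real
  assumes "m \<ge> 2"
    and "set_pmf X0star \<subseteq> {1..}"
    and "measure_pmf.prob X0star {2..} > 0"
    and "integrable (measure_pmf X0star) (\<lambda>x. real x * real m ^ x)"
    and "p_crit m X0star \<le> p" and "p < 1"
  shows "beta_regular m 0 (1 - p) (mix_law p X0star)"
proof -
  let ?M = "measure_pmf X0star"
  let ?Z = "mix_law p X0star"
  have m2: "real m \<ge> 2" using assms(1) by simp
  have supp: "\<And>x. x \<in> set_pmf X0star \<Longrightarrow> x \<ge> 1" using assms(2) by auto
  let ?h = "\<lambda>x::nat. ((real m - 1) * real x - 1) * real m ^ x"
  define E where "E = measure_pmf.expectation X0star ?h"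
  have hnn: "\<And>x. x \<ge> 1 \<Longrightarrow> 0 \<le> ?h x"
  proof -
    fix x :: nat assume "x \<ge> 1"
    hence "(real m - 1) * real x \<ge> 1 * 1" using m2 by (intro mult_mono) auto
    thus "0 \<le> ?h x" by simp
  qed
  have hb: "\<And>x. x \<ge> 1 \<Longrightarrow> norm (?h x) \<le> norm (real m * (real x * real m ^ x))"
  proof -
    fix x :: nat assume x: "x \<ge> 1"
    have "?h x \<le> real m * (real x * real m ^ x)"
      using m2 by (simp add: algebra_simps)
    thus "norm (?h x) \<le> norm (real m * (real x * real m ^ x))" using hnn[OF x] by simp
  qed
  have hint: "integrable ?M ?h"
    apply (rule Bochner_Integration.integrable_bound[of _ "\<lambda>x. real m * (real x * real m ^ x)"])
    using assms(4) hb supp by (auto simp: AE_measure_pmf_iff)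
  have E0: "0 \<le> E" unfolding E_def using hnn supp
    by (intro integral_nonneg_AE) (auto simp: AE_measure_pmf_iff)
  have pc: "1 / (1 + E) \<le> p" using assms(5) unfolding p_crit_def E_def by simp
  hence p1: "1 \<le> p * (1 + E)" using E0 by (simp add: field_simps)
  have p0: "0 < p" using p1 E0 by (smt (verit) mult_le_0_iff)
  have pp: "0 \<le> p" "p \<le> 1" using p0 assms(6) by auto
  have i1: "integrable ?M (\<lambda>x. real x * real m ^ x)" by (rule assms(4))
  have c1: "integrable (measure_pmf ?Z) (\<lambda>x. real x * real m ^ x)"
    using mix_int[OF pp i1] by simp
  have c2: "measure_pmf.prob ?Z {2..} > 0"
  proof -
    have ii: "integrable ?M (indicator {2..} :: nat \<Rightarrow> real)"
      by (rule measure_pmf.integrable_const_bound[where B=1]) auto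
    have "measure_pmf.expectation ?Z (indicator {2..} :: nat \<Rightarrow> real)
        = p * measure_pmf.expectation X0star (indicator {2..} :: nat \<Rightarrow> real)"
      using mix_int[OF pp ii] by simp
    thus ?thesis using assms(3) p0 by simp
  qed
  have c3: "ereal (Xi m k ?Z) \<ge> ereal (1 - p) * min (enn2ereal (Lambda m ?Z)) (ereal (real k powr 0))"
    if k: "k \<ge> 1" for k :: nat
  proof -
    let ?g = "\<lambda>x. real (min x k) ^ 2 * ((real m - 1) * real x - 1) * real m ^ x"
    have gnn: "\<And>x. 0 \<le> ?g x"
    proof -
      fix x :: nat
      show "0 \<le> ?g x"
      proof (cases "x = 0")
        case False thus ?thesis using hnn[of x] by (simp add: mult.assoc)
      qed simp
    qed
    have gb: "\<And>x. x \<ge> 1 \<Longrightarrow> norm (?g x) \<le> norm (real k ^ 2 * (real m * (real x * real m ^ x)))"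
    proof -
      fix x :: nat assume x: "x \<ge> 1"
      have a: "real (min x k) ^ 2 \<le> real k ^ 2" by (intro power_mono) auto
      have "?g x = real (min x k) ^ 2 * ?h x" by (simp add: mult.assoc)
      also have "\<dots> \<le> real k ^ 2 * (real m * (real x * real m ^ x))"
      proof -
        have hb': "?h x \<le> real m * (real x * real m ^ x)" using hb[OF x] hnn[OF x] by simp
        show ?thesis by (rule mult_mono[OF a hb']) (use hnn[OF x] in auto)
      qed
      finally show "norm (?g x) \<le> norm (real k ^ 2 * (real m * (real x * real m ^ x)))"
        using gnn[of x] by simp
    qed
    have gint: "integrable ?M ?g"
      apply (rule Bochner_Integration.integrable_bound[of _ "\<lambda>x. real k ^ 2 * (real m * (real x * real m ^ x))"])
      using assms(4) gb supp by (auto simp: AE_measure_pmf_iff)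
    have gh: "E \<le> measure_pmf.expectation X0star ?g"
      unfolding E_def
    proof (rule integral_mono_AE[OF hint gint])
      show "AE x in ?M. ?h x \<le> ?g x"
        unfolding AE_measure_pmf_iff
      proof
        fix x assume "x \<in> set_pmf X0star"
        hence x: "x \<ge> 1" using supp by auto
        have "1 \<le> real (min x k) ^ 2" using x k by simp
        hence "1 * ?h x \<le> real (min x k) ^ 2 * ?h x" using hnn[OF x] by (intro mult_right_mono) auto
        thus "?h x \<le> ?g x" by (simp add: mult.assoc)
      qed
    qed
    have xi: "Xi m k ?Z = p * measure_pmf.expectation X0star ?g"
      unfolding Xi_def using mix_int[OF pp gint] gnn by simp
    have "1 - p \<le> p * E" using p1 by (simp add: algebra_simps)
    also have "\<dots> \<le> Xi m k ?Z" unfolding xi using gh p0 by (intro mult_left_mono) auto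
    finally have le: "1 - p \<le> Xi m k ?Z" .
    have "ereal (1 - p) * min (enn2ereal (Lambda m ?Z)) (ereal (real k powr 0))
        \<le> ereal (1 - p) * ereal 1"
      using k pp by (intro ereal_mult_left_mono) auto
    also have "\<dots> \<le> ereal (Xi m k ?Z)" using le by simp
    finally show ?thesis .
  qed
  show ?thesis unfolding beta_regular_def using c1 c2 c3 pp assms(6) by auto
qed

end
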